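(* Let $k\ge2$ be an integer and $c\in(0,1)$. Let $(M_n)_{n\ge1}$ be integers with $1\le M_n\le kn-1$ and $M_n/(kn)\to c$ as $n\to\infty$. Then \[ \lim_{n\to\infty} P_{n,k}(\mathcal{S}(n,k;M_n))=-(1-c)^k\sum_{l=1}^{k-1}\binom kl\Big(\frac c{1-c}\Big)^l\frac l{k-l} +k\sum_{l=1}^{k-1}\binom kl c^l\int_0^{1-c}\frac{y^{k-l-1}}{1-y^k}\,dy-c^k\log\big(1-(1-c)^k\big). \]
   Context: Fix integers $k\ge2$, $n\ge1$. There are $kn$ items, $k$ items at each of the ranks $1,2,\dots,n$ (rank $n$ is highest). The items are revealed one at a time in a uniformly random order, i.e. the sequence of ranks is a uniformly random permutation of the multiset $\{1^k,2^k,\dots,n^k\}$; $P_{n,k}$ denotes this uniform probability. For $M\in\{1,\dots,kn-1\}$, the strategy $\mathcal{S}(n,k;M)$ lets the first $M$ items pass and then selects the first later-arriving item whose rank is greater than or equal to the highest rank among the first $M$ items (if such an item exists; otherwise nothing is selected). $P_{n,k}(\mathcal{S}(n,k;M))$ denotes the probability that this strategy selects an item of rank $n$. *)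

theory Defs
  imports "HOL-Analysis.Analysis" "HOL-Combinatorics.Multiset_Permutations"
begin

definition rank_mset :: "nat \<Rightarrow> nat \<Rightarrow> nat multiset" where
  "rank_mset n k = (\<Sum>i\<in>{1..n}. replicate_mset k i)"

text \<open>All possible arrival sequences of ranks (equally likely).\<close>
definition arrivals :: "nat \<Rightarrow> nat \<Rightarrow> nat list set" where
  "arrivals n k = permutations_of_multiset (rank_mset n k)"

definition strategy_wins :: "nat \<Rightarrow> nat \<Rightarrow> nat list \<Rightarrow> bool" where
  "strategy_wins n M xs =
     (case find (\<lambda>r. Max (set (take M xs)) \<le> r) (drop M xs) of
        Some r \<Rightarrow> r = n
      | None \<Rightarrow> False)"

definition win_prob :: "nat \<Rightarrow> nat \<Rightarrow> nat \<Rightarrow> real" where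
  "win_prob n k M =
     real (card {xs \<in> arrivals n k. strategy_wins n M xs}) / real (card (arrivals n k))"

end

theory Submission
  imports Defs
begin


lemma power_has_integral:
  fixes x :: real assumes "0 \<le> x"
  shows "((\<lambda>y. y ^ n) has_integral x ^ Suc n / Suc n) {0..x}"
proof -
  have "((\<lambda>y. y ^ n) has_integral ((\<lambda>y. y ^ Suc n / Suc n) x - (\<lambda>y. y ^ Suc n / Suc n) 0)) {0..x}"
    apply (rule fundamental_theorem_of_calculus)
    using assms apply simp
    apply (intro ballI has_real_derivative_iff_has_vector_derivative[THEN iffD1])
    apply (rule DERIV_cdivide[OF DERIV_pow, THEN DERIV_cong])
    apply simp
    done
  then show ?thesis by simp
qed

lemma series_integral:
  fixes x :: real
  assumes x: "0 \<le> x" "x < 1" and a: "a \<ge> 1" and k: "k \<ge> 1"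
  shows "(\<lambda>t. x ^ (a + k * t) / real (a + k * t)) sums
           integral {0..x} (\<lambda>y. y ^ (a - 1) / (1 - y ^ k))"
proof -
  define f where "f T y = (\<Sum>t<T. y ^ (a - 1 + k * t))" for T and y :: real
  define h where "h y = y ^ (a - 1) / (1 - y ^ k)" for y :: real
  have fint: "(f T has_integral (\<Sum>t<T. x ^ (a + k * t) / real (a + k * t))) {0..x}" for T
  proof -
    have "(f T has_integral (\<Sum>t<T. x ^ Suc (a - 1 + k * t) / real (Suc (a - 1 + k * t)))) {0..x}"
      unfolding f_def by (intro has_integral_sum power_has_integral x) auto
    moreover have "(\<Sum>t<T. x ^ Suc (a - 1 + k * t) / real (Suc (a - 1 + k * t))) =
          (\<Sum>t<T. x ^ (a + k * t) / real (a + k * t))"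
      using a by (intro sum.cong) (auto simp: Suc_diff_le)
    ultimately show ?thesis by simp
  qed
  have yk: "y ^ k < 1" if "y \<in> {0..x}" for y
    using that x k by (metis atLeastAtMost_iff le_less_trans order.refl power_less_one_iff power_strict_mono less_le_not_le zero_le_one  not_one_le_zero One_nat_def Suc_le_eq power_one x(2)) 
  have hcont: "continuous_on {0..x} h"
    unfolding h_def using yk by (intro continuous_intros) (auto simp: less_le)
  have lim: "(\<lambda>T. f T y) \<longlonglongrightarrow> h y" if "y \<in> {0..x}" for y
  proof -
    have "(\<lambda>t. (y ^ k) ^ t) sums (1 / (1 - y ^ k))"
      using that yk[OF that] by (intro geometric_sums) auto
    then have "(\<lambda>t. y ^ (a - 1) * (y ^ k) ^ t) sums (y ^ (a - 1) * (1 / (1 - y ^ k)))"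
      by (rule sums_mult)
    then show ?thesis unfolding sums_def f_def h_def by (simp add: power_add power_mult)
  qed
  have bnd: "norm (f T y) \<le> h y" if "y \<in> {0..x}" for T y
  proof -
    have nn: "0 \<le> y ^ t" for t using that by auto
    have "f T y \<le> h y"
      using lim[OF that] unfolding f_def
      by (intro incseq_le) (auto intro!: incseq_SucI simp: nn)
    moreover have "0 \<le> f T y" unfolding f_def using nn by (simp add: sum_nonneg)
    ultimately show ?thesis by simp
  qed
  have "(\<lambda>T. integral {0..x} (f T)) \<longlonglongrightarrow> integral {0..x} h"
    by (rule dominated_convergence(2)[where h=h])
       (use fint bnd lim integrable_continuous_interval[OF hcont] in \<open>auto simp: has_integral_integrable\<close>)
  moreover have "integral {0..x} (f T) = (\<Sum>t<T. x ^ (a + k * t) / real (a + k * t))" for T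
    using fint by (rule integral_unique)
  ultimately show ?thesis unfolding sums_def h_def by simp
qed

lemma log_series:
  fixes z :: real assumes "0 \<le> z" "z < 1"
  shows "(\<lambda>t. z ^ Suc t / real (Suc t)) sums (- ln (1 - z))"
proof -
  have "(\<lambda>n. - ((-(-z))^n) / of_nat n) sums ln (1 + (-z))"
    by (rule ln_series') (use assms in auto)
  then have "(\<lambda>n. z^n / of_nat n) sums (- ln (1 - z))"
    using sums_minus by fastforce
  then show ?thesis by (subst sums_Suc_iff) simp
qed

definition wt :: "nat \<Rightarrow> nat \<Rightarrow> nat \<Rightarrow> real" where
  "wt k t j = (if t = 0 then real (k - j) else real k) / real (k - j + k * t)"

definition limterm :: "nat \<Rightarrow> real \<Rightarrow> nat \<Rightarrow> real" where
  "limterm k c t = (\<Sum>j\<in>{1..k}. real (k choose j) * c ^ j * (1 - c) ^ (k - j + k * t) * wt k t j)"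

lemma limterm_sums:
  fixes c :: real
  assumes k: "k \<ge> 2" and c: "0 < c" "c < 1"
  shows "limterm k c sums
    (- ((1 - c) ^ k) * (\<Sum>l = 1..k - 1. real (k choose l) * (c / (1 - c)) ^ l * (real l / real (k - l)))
     + real k * (\<Sum>l = 1..k - 1. real (k choose l) * c ^ l *
          integral {0..1 - c} (\<lambda>y. y ^ (k - l - 1) / (1 - y ^ k)))
     - c ^ k * ln (1 - (1 - c) ^ k))"
proof -
  define x where "x = 1 - c"
  have x: "0 < x" "x < 1" using c by (auto simp: x_def)
  define I where "I l = integral {0..x} (\<lambda>y. y ^ (k - l - 1) / (1 - y ^ k))" for l
  define S where "S j = (if j < k then I j - x ^ (k - j) / real (k - j) else - ln (1 - x ^ k) / real k)" for j
  have kset: "{1..k} = insert k {1..k-1}" using k by auto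
  have Ssums: "(\<lambda>t. x ^ (k - j + k * Suc t) / real (k - j + k * Suc t)) sums S j" if j: "j \<in> {1..k}" for j
  proof (cases "j < k")
    case True
    have "(\<lambda>t. x ^ ((k - j) + k * t) / real ((k - j) + k * t)) sums
           integral {0..x} (\<lambda>y. y ^ ((k - j) - 1) / (1 - y ^ k))"
      using x True k by (intro series_integral) auto
    then have "(\<lambda>t. x ^ ((k - j) + k * Suc t) / real ((k - j) + k * Suc t)) sums
           (integral {0..x} (\<lambda>y. y ^ ((k - j) - 1) / (1 - y ^ k)) - x ^ (k - j) / real (k - j))"
      by (subst sums_Suc_iff) simp
    then show ?thesis using True by (simp add: S_def I_def)
  next
    case False
    then have jk: "j = k" using j by auto
    have xk: "0 \<le> x ^ k" "x ^ k < 1" using x k by (auto simp: power_less_one_iff)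
    have "(\<lambda>t. (x ^ k) ^ Suc t / real (Suc t)) sums (- ln (1 - x ^ k))"
      by (rule log_series[OF xk])
    then have "(\<lambda>t. (x ^ k) ^ Suc t / real (Suc t) / real k) sums (- ln (1 - x ^ k) / real k)"
      by (rule sums_divide)
    moreover have "(x ^ k) ^ Suc t / real (Suc t) / real k = x ^ (k - j + k * Suc t) / real (k - j + k * Suc t)" for t
      using jk by (simp add: power_mult[symmetric] mult.commute power_add distrib_left)
    ultimately show ?thesis using jk by (simp add: S_def)
  qed
  have tail: "(\<lambda>t. limterm k c (Suc t)) sums (\<Sum>j\<in>{1..k}. real (k choose j) * c ^ j * real k * S j)"
  proof -
    have "(\<lambda>t. \<Sum>j\<in>{1..k}. real (k choose j) * c ^ j * real k * (x ^ (k - j + k * Suc t) / real (k - j + k * Suc t)))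
       sums (\<Sum>j\<in>{1..k}. real (k choose j) * c ^ j * real k * S j)"
      by (intro sums_sum sums_mult Ssums)
    moreover have "limterm k c (Suc t) = (\<Sum>j\<in>{1..k}. real (k choose j) * c ^ j * real k * (x ^ (k - j + k * Suc t) / real (k - j + k * Suc t)))" for t
      unfolding limterm_def wt_def x_def by (intro sum.cong) auto
    ultimately show ?thesis by simp
  qed
  have l0: "limterm k c 0 = (\<Sum>l = 1..k - 1. real (k choose l) * c ^ l * x ^ (k - l))"
    unfolding limterm_def wt_def x_def kset using k by (auto intro!: sum.cong)
  have "limterm k c sums ((\<Sum>j\<in>{1..k}. real (k choose j) * c ^ j * real k * S j) + limterm k c 0)"
    using tail by (subst (asm) sums_Suc_iff)
  moreover have "(\<Sum>j\<in>{1..k}. real (k choose j) * c ^ j * real k * S j) + limterm k c 0 =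
      (- (x ^ k) * (\<Sum>l = 1..k - 1. real (k choose l) * (c / x) ^ l * (real l / real (k - l)))
     + real k * (\<Sum>l = 1..k - 1. real (k choose l) * c ^ l * I l)
     - c ^ k * ln (1 - x ^ k))"
  proof -
    have A: "(\<Sum>j\<in>{1..k}. real (k choose j) * c ^ j * real k * S j) =
       (\<Sum>l = 1..k - 1. real (k choose l) * c ^ l * real k * (I l - x ^ (k - l) / real (k - l)))
        - c ^ k * ln (1 - x ^ k)"
    proof -
      have "(\<Sum>j\<in>{1..k-1}. real (k choose j) * c ^ j * real k * S j) =
        (\<Sum>l = 1..k - 1. real (k choose l) * c ^ l * real k * (I l - x ^ (k - l) / real (k - l)))"
        by (intro sum.cong) (auto simp: S_def)
      moreover have Sk: "S k = - ln (1 - x ^ k) / real k" by (simp add: S_def)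
      ultimately show ?thesis using k unfolding kset by simp
    qed
    have B: "real (k choose l) * c ^ l * real k * (I l - x ^ (k - l) / real (k - l)) + real (k choose l) * c ^ l * x ^ (k - l)
       = - (x ^ k) * (real (k choose l) * (c / x) ^ l * (real l / real (k - l))) + real k * (real (k choose l) * c ^ l * I l)"
      if l: "l \<in> {1..k-1}" for l
    proof -
      have "l + (k - l) = k" using l by auto
      then have "x ^ k = x ^ l * x ^ (k - l)" by (metis power_add)
      then have e1: "x ^ k * (c / x) ^ l = c ^ l * x ^ (k - l)"
        using x by (simp add: power_divide)
      have d: "real (k - l) > 0" "real k = real (k - l) + real l" using l by auto
      have e2: "1 - real k / real (k - l) = - (real l / real (k - l))"
      proof -
        have "real k / real (k - l) = real (k - l) / real (k - l) + real l / real (k - l)"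
          by (subst d(2)) (rule add_divide_distrib)
        then show ?thesis using d(1) by simp
      qed
      have "real (k choose l) * c ^ l * real k * (I l - x ^ (k - l) / real (k - l)) + real (k choose l) * c ^ l * x ^ (k - l)
         = real k * (real (k choose l) * c ^ l * I l) + (real (k choose l) * c ^ l * x ^ (k - l)) * (1 - real k / real (k - l))"
        by (simp add: algebra_simps)
      also have "\<dots> = real k * (real (k choose l) * c ^ l * I l) - (real (k choose l) * c ^ l * x ^ (k - l)) * (real l / real (k - l))"
        by (simp add: e2)
      also have "\<dots> = - (x ^ k) * (real (k choose l) * (c / x) ^ l * (real l / real (k - l))) + real k * (real (k choose l) * c ^ l * I l)"
        using e1 by (simp add: algebra_simps)
      finally show ?thesis .
    qed
    show ?thesis
      unfolding A l0 using B
      by (simp add: sum.distrib[symmetric] sum_distrib_left sum_negf algebra_simps)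
  qed
  ultimately show ?thesis unfolding x_def I_def by simp
qed




lemma fact_split_real:
  assumes "a \<le> N"
  shows "(fact N :: real) = fact (N - a) * (\<Prod>i<a. real (N - i))"
  using assms
proof (induction a)
  case 0 then show ?case by simp
next
  case (Suc a)
  obtain d where d: "N - a = Suc d" "N - Suc a = d" using Suc.prems
    by (metis Suc_diff_Suc Suc_le_lessD diff_Suc_1 diff_Suc_Suc)
  have "(fact (N - a) :: real) = real (N - a) * fact (N - Suc a)"
    unfolding d by (simp only: fact_Suc of_nat_Suc)
  then show ?case using Suc by (simp add: mult_ac)
qed

lemma ratio_aux:
  fixes a1 a2 a3 p q u v :: real
  assumes "a1 \<noteq> 0" "a2 \<noteq> 0" "a3 \<noteq> 0" "p \<noteq> 0" "q \<noteq> 0"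
  shows "(a1 / (a2 * a3)) / ((a1 * q * p) / ((a2 * u) * (a3 * v))) = u / p * (v / q)"
proof (cases "u = 0 \<or> v = 0")
  case True then show ?thesis by (elim disjE) simp_all
next
  case False then show ?thesis using assms by (simp add: field_simps)
qed

lemma binom_ratio:
  fixes N M a j :: nat
  assumes "j \<le> M" "M \<le> N" "j \<le> a" "a \<le> N" "M - j \<le> N - a"
  shows "real ((N - a) choose (M - j)) / real (N choose M) =
    (\<Prod>i<j. real (M - i) / real (N - i)) * (\<Prod>i<a - j. real (N - M - i) / real (N - j - i))"
proof -
  have fN: "(fact N :: real) = fact (N - j) * (\<Prod>i<j. real (N - i))"
    using assms by (intro fact_split_real) auto
  have fNj: "(fact (N - j) :: real) = fact (N - a) * (\<Prod>i<a - j. real (N - j - i))"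
    using fact_split_real[of "a - j" "N - j"] assms by simp
  have fM: "(fact M :: real) = fact (M - j) * (\<Prod>i<j. real (M - i))"
    using assms by (intro fact_split_real) auto
  have fNM: "(fact (N - M) :: real) = fact (N - M - (a - j)) * (\<Prod>i<a - j. real (N - M - i))"
    using assms by (intro fact_split_real) auto
  have e: "N - a - (M - j) = N - M - (a - j)" using assms by auto
  have b1: "real ((N - a) choose (M - j)) = fact (N - a) / (fact (M - j) * fact (N - M - (a - j)))"
    using assms by (subst binomial_fact) (auto simp: e add.commute)
  have b2: "real (N choose M) = fact N / (fact M * fact (N - M))"
    using assms by (subst binomial_fact) auto
  have p1: "(\<Prod>i<j. real (N - i)) \<noteq> 0" using assms by (auto simp: prod_zero_iff)
  have p2: "(\<Prod>i<a - j. real (N - j - i)) \<noteq> 0" using assms by (auto simp: prod_zero_iff)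
  show ?thesis
    unfolding b1 b2 fN fNj fM fNM prod_dividef using p1 p2
    by (intro ratio_aux) auto
qed

definition aterm :: "nat \<Rightarrow> nat \<Rightarrow> nat \<Rightarrow> nat \<Rightarrow> nat \<Rightarrow> real" where
  "aterm k n M t j = (if j \<le> M then real (k choose j) * real ((k * (n - t - 1)) choose (M - j)) / real ((k * n) choose M) else 0)"

definition fterm :: "nat \<Rightarrow> nat \<Rightarrow> nat \<Rightarrow> nat \<Rightarrow> real" where
  "fterm k n M t = (if t < n then (\<Sum>j\<in>{1..k}. aterm k n M t j * wt k t j) else 0)"

lemma ratio_lim:
  fixes p q :: "nat \<Rightarrow> nat" and D :: "nat \<Rightarrow> real"
  assumes "(\<lambda>n. real (p n) / D n) \<longlonglongrightarrow> A" "(\<lambda>n. real (q n) / D n) \<longlonglongrightarrow> B" "B \<noteq> 0"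
    and D: "filterlim D at_top sequentially"
    and ev: "eventually (\<lambda>n. i \<le> p n \<and> i' \<le> q n) sequentially"
  shows "(\<lambda>n. real (p n - i) / real (q n - i')) \<longlonglongrightarrow> A / B"
proof -
  have z: "(\<lambda>n. real i / D n) \<longlonglongrightarrow> 0" "(\<lambda>n. real i' / D n) \<longlonglongrightarrow> 0"
    using D by (auto intro!: tendsto_divide_0 filterlim_at_top_imp_at_infinity)
  have "(\<lambda>n. (real (p n) / D n - real i / D n) / (real (q n) / D n - real i' / D n)) \<longlonglongrightarrow> (A - 0) / (B - 0)"
    using assms z by (intro tendsto_intros) auto
  moreover have "eventually (\<lambda>n. (real (p n) / D n - real i / D n) / (real (q n) / D n - real i' / D n) =
      real (p n - i) / real (q n - i')) sequentially"
    using ev D[unfolded filterlim_at_top_dense, rule_format, of 0]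
  proof eventually_elim
    case (elim n)
    then have "D n \<noteq> 0" by auto
    then show ?case using elim by (simp add: of_nat_diff diff_divide_distrib[symmetric])
  qed
  ultimately show ?thesis by (auto intro: Lim_transform_eventually)
qed

lemma frac_mono_aux:
  fixes L N i j :: nat
  assumes "j \<le> L" "L \<le> N" "i + j < N"
  shows "real (N - L - i) / real (N - j - i) \<le> real (N - L) / real (N - j)"
proof -
  have p1: "real (N - j - i) > 0" "real (N - j) > 0" using assms by auto
  have "real (N - L - i) * real (N - j) \<le> real (N - L) * real (N - j - i)"
  proof (cases "i \<le> N - L")
    case True
    have e1: "real (N - L - i) = real (N - L) - real i" using True by (simp add: of_nat_diff)
    have e2: "real (N - j - i) = real (N - j) - real i" using True assms by (simp add: of_nat_diff)
    have "real (N - L) \<le> real (N - j)" using assms by auto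
    then have "real i * real (N - L) \<le> real i * real (N - j)" by (rule mult_left_mono) auto
    then show ?thesis unfolding e1 e2 by (simp add: algebra_simps)
  next
    case False
    then show ?thesis by simp
  qed
  then show ?thesis using p1 by (simp add: divide_simps)
qed

locale asym =
  fixes k :: nat and c :: real and M :: "nat \<Rightarrow> nat"
  assumes k: "k \<ge> 2" and c: "0 < c" "c < 1"
    and Mb: "\<And>n. n \<ge> 1 \<Longrightarrow> 1 \<le> M n \<and> M n \<le> k * n - 1"
    and lim: "(\<lambda>n. real (M n) / real (k * n)) \<longlonglongrightarrow> c"
begin

lemma D_lim: "filterlim (\<lambda>n. real (k * n)) at_top sequentially"
proof -
  have "filterlim (\<lambda>n. real k * real n) at_top sequentially"
    using k by (intro filterlim_tendsto_pos_mult_at_top[OF tendsto_const] filterlim_real_sequentially) auto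
  then show ?thesis by simp
qed

lemma ev_n: "eventually (\<lambda>n. n \<ge> 1) sequentially"
  by (rule eventually_ge_at_top)

lemma M_le: "eventually (\<lambda>n. M n \<le> k * n) sequentially"
  using ev_n by eventually_elim (metis Mb diff_le_self le_trans)

lemma NM_lim: "(\<lambda>n. real (k * n - M n) / real (k * n)) \<longlonglongrightarrow> 1 - c"
proof -
  have "(\<lambda>n. 1 - real (M n) / real (k * n)) \<longlonglongrightarrow> 1 - c" by (intro tendsto_intros lim)
  moreover have "eventually (\<lambda>n. 1 - real (M n) / real (k * n) = real (k * n - M n) / real (k * n)) sequentially"
    using M_le ev_n
  proof eventually_elim
    case (elim n)
    then have "real (k * n) > 0" using k by auto
    then show ?case using elim k by (simp add: of_nat_diff diff_divide_distrib)
  qed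
  ultimately show ?thesis by (rule Lim_transform_eventually)
qed

lemma N_lim: "(\<lambda>n. real (k * n) / real (k * n)) \<longlonglongrightarrow> 1"
proof -
  have "eventually (\<lambda>n. 1 = real (k * n) / real (k * n)) sequentially"
    using ev_n by eventually_elim (use k in auto)
  then show ?thesis by (rule Lim_transform_eventually[OF tendsto_const])
qed

lemma Nj_lim: "(\<lambda>n. real (k * n - j) / real (k * n)) \<longlonglongrightarrow> 1"
proof -
  have "(\<lambda>n. real (k * n - j) / real (k * n - 0)) \<longlonglongrightarrow> 1 / 1"
  proof (rule ratio_lim[OF N_lim N_lim _ D_lim])
    show "eventually (\<lambda>n. j \<le> k * n \<and> 0 \<le> k * n) sequentially"
      using eventually_ge_at_top[of j]
    proof eventually_elim
      case (elim n)
      have "1 * n \<le> k * n" using k by (intro mult_le_mono1) auto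
      then have "j \<le> k * n" using elim by linarith
      then show ?case by simp
    qed
  qed auto
  then show ?thesis by simp
qed

lemma M_big: "eventually (\<lambda>n. M n \<ge> K \<and> k * n - M n \<ge> K) sequentially"
proof -
  have f1: "filterlim (\<lambda>n. real (M n) / real (k * n) * real (k * n)) at_top sequentially"
    by (rule filterlim_tendsto_pos_mult_at_top[OF lim c(1) D_lim])
  have f2: "filterlim (\<lambda>n. real (k * n - M n) / real (k * n) * real (k * n)) at_top sequentially"
    by (rule filterlim_tendsto_pos_mult_at_top[OF NM_lim _ D_lim]) (use c in auto)
  show ?thesis
    using f1[unfolded filterlim_at_top, rule_format, of "real K"]
          f2[unfolded filterlim_at_top, rule_format, of "real K"] ev_n
  proof eventually_elim
    case (elim n)
    then have "real (k * n) > 0" using k by auto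
    then have "real (M n) / real (k * n) * real (k * n) = real (M n)"
      "real (k * n - M n) / real (k * n) * real (k * n) = real (k * n - M n)"
      by (simp_all add: field_simps del: of_nat_mult)
    then show ?case using elim(1) elim(2) by (simp only: of_nat_le_iff)
  qed
qed

lemma aterm_lim:
  assumes j: "j \<in> {1..k}"
  shows "(\<lambda>n. aterm k n (M n) t j) \<longlonglongrightarrow> real (k choose j) * c ^ j * (1 - c) ^ (k - j + k * t)"
proof -
  define a where "a = k * (t + 1)"
  have ja: "j \<le> a" using j by (auto simp: a_def)
  have aj: "a - j = k - j + k * t" using j by (auto simp: a_def)
  define r1 where "r1 n i = real (M n - i) / real (k * n - i)" for n i
  define r2 where "r2 n i = real (k * n - M n - i) / real (k * n - j - i)" for n i
  have ev: "eventually (\<lambda>n. aterm k n (M n) t j =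
      real (k choose j) * ((\<Prod>i<j. r1 n i) * (\<Prod>i<a - j. r2 n i))) sequentially"
    using M_big[of a] M_le
  proof eventually_elim
    case (elim n)
    have an: "a \<le> k * n" using elim by auto
    have tn: "k * (n - t - 1) = k * n - a" by (simp add: a_def diff_mult_distrib2 algebra_simps)
    have "real ((k * n - a) choose (M n - j)) / real ((k * n) choose (M n)) =
      (\<Prod>i<j. r1 n i) * (\<Prod>i<a - j. r2 n i)"
      unfolding r1_def r2_def using elim ja an by (intro binom_ratio) auto
    moreover have "j \<le> M n" using elim ja by auto
    ultimately show ?case unfolding aterm_def tn by (simp add: times_divide_eq_right[symmetric])
  qed
  have l1: "(\<lambda>n. r1 n i) \<longlonglongrightarrow> c / 1" for i
    unfolding r1_def
    by (rule ratio_lim[OF lim N_lim _ D_lim]) (use M_big[of i] in \<open>auto elim: eventually_mono\<close>)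
  have l2: "(\<lambda>n. r2 n i) \<longlonglongrightarrow> (1 - c) / 1" for i
    unfolding r2_def
    by (rule ratio_lim[OF NM_lim Nj_lim _ D_lim]) (use M_big[of "i + j"] in \<open>auto elim: eventually_mono\<close>)
  have "(\<lambda>n. real (k choose j) * ((\<Prod>i<j. r1 n i) * (\<Prod>i<a - j. r2 n i))) \<longlonglongrightarrow>
        real (k choose j) * ((\<Prod>i<j. c / 1) * (\<Prod>i<a - j. (1 - c) / 1))"
    by (intro tendsto_intros l1 l2)
  then have "(\<lambda>n. real (k choose j) * ((\<Prod>i<j. r1 n i) * (\<Prod>i<a - j. r2 n i))) \<longlonglongrightarrow>
        real (k choose j) * c ^ j * (1 - c) ^ (k - j + k * t)"
    by (simp add: aj mult.assoc)
  then show ?thesis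
    using ev by (rule Lim_transform_eventually[OF _ eventually_mono]) auto
qed


lemma wt_bound:
  assumes "j \<le> k" "1 \<le> k"
  shows "0 \<le> wt k t j \<and> wt k t j \<le> 1"
proof (cases "t = 0")
  case True then show ?thesis by (simp add: wt_def)
next
  case False
  have "k * 1 \<le> k * t" using False by (intro mult_le_mono2) auto
  then have "k \<le> k - j + k * t" by linarith
  then have "real k \<le> real (k - j + k * t)" by (simp only: of_nat_le_iff)
  then show ?thesis using False assms by (simp add: wt_def)
qed

lemma ratio01:
  fixes x y :: nat
  assumes "0 < y" "x \<le> y"
  shows "0 \<le> real x / real y \<and> real x / real y \<le> (1::real)"
  using assms by (simp add: divide_le_eq_1)

definition rho where "rho = 1 - c / 2"

lemma rho: "0 < rho" "rho < 1" "1 - c < rho"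
  using c by (auto simp: rho_def)

lemma aterm_bound:
  "eventually (\<lambda>n. \<forall>t<n. \<forall>j\<in>{1..k}. 0 \<le> aterm k n (M n) t j \<and>
       aterm k n (M n) t j \<le> real (k choose j) * rho ^ (k * t)) sequentially"
proof -
  have Q: "(\<lambda>n. real (k * n - M n - 0) / real (k * n - k)) \<longlonglongrightarrow> (1 - c) / 1"
  proof (rule ratio_lim[OF NM_lim N_lim _ D_lim])
    show "eventually (\<lambda>n. 0 \<le> k * n - M n \<and> k \<le> k * n) sequentially"
      using eventually_ge_at_top[of 1] by eventually_elim auto
  qed auto
  have Qev: "eventually (\<lambda>n. real (k * n - M n) / real (k * n - k) < rho) sequentially"
    using order_tendstoD(2)[OF Q] rho by simp
  show ?thesis
    using Qev M_big[of k] M_le eventually_ge_at_top[of 2]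
  proof eventually_elim
    case (elim n)
    let ?N = "k * n" and ?Mn = "M n"
    have e1: "real (k * n - M n) / real (k * n - k) < rho" using elim(1) .
    have e2: "k \<le> M n" "k \<le> k * n - M n" using elim(2) by auto
    have e3: "M n \<le> k * n" using elim(3) .
    have e4: "2 \<le> n" using elim(4) .
    have "k * 2 \<le> k * n" using e4 by (rule mult_le_mono2)
    then have kN: "k < ?N" using k by linarith
    show ?case
    proof (intro allI impI ballI)
      fix t j assume t: "t < n" and j: "j \<in> {1..k}"
      define a where "a = k * (t + 1)"
      have "t + 1 \<le> n" using t by simp
      then have an: "a \<le> ?N" unfolding a_def by (rule mult_le_mono2)
      have ja: "j \<le> a" using j by (auto simp: a_def)
      have jk: "j \<le> k" using j by simp
      have jM: "j \<le> ?Mn" using jk e2 by linarith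
      have tn: "k * (n - t - 1) = k * n - a" by (simp add: a_def diff_mult_distrib2 algebra_simps)
      have aj: "k * t \<le> a - j" using j by (auto simp: a_def)
      have rhopow: "rho ^ (a - j) \<le> rho ^ (k * t)"
        using rho aj by (intro power_decreasing) auto
      have at: "aterm k n (M n) t j = real (k choose j) * (real ((?N - a) choose (?Mn - j)) / real (?N choose ?Mn))"
        unfolding aterm_def tn using jM by simp
      show "0 \<le> aterm k n (M n) t j \<and> aterm k n (M n) t j \<le> real (k choose j) * rho ^ (k * t)"
      proof (cases "?Mn - j \<le> ?N - a")
        case False
        then have "aterm k n (M n) t j = 0" unfolding at by simp
        then show ?thesis using rho by simp
      next
        case True
        have eq: "real ((?N - a) choose (?Mn - j)) / real (?N choose ?Mn) =
          (\<Prod>i<j. real (?Mn - i) / real (?N - i)) * (\<Prod>i<a - j. real (?N - ?Mn - i) / real (?N - j - i))"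
          using jM e3 ja an True by (intro binom_ratio)
        have P1: "0 \<le> (\<Prod>i<j. real (?Mn - i) / real (?N - i)) \<and> (\<Prod>i<j. real (?Mn - i) / real (?N - i)) \<le> 1"
        proof -
          have f: "0 \<le> real (?Mn - i) / real (?N - i) \<and> real (?Mn - i) / real (?N - i) \<le> 1" if "i \<in> {..<j}" for i
          proof -
            have "i < j" using that by simp
            then have "i < ?N" using jM e3 by linarith
            then have "0 < ?N - i" by simp
            then have "real (?N - i) > 0" by (simp only: of_nat_0_less_iff)
            moreover have "?Mn - i \<le> ?N - i" using e3 by (rule diff_le_mono)
            then have "real (?Mn - i) \<le> real (?N - i)" by (simp only: of_nat_le_iff)
            show ?thesis by (rule ratio01) fact+
          qed
          show ?thesis
          proof
            show "0 \<le> (\<Prod>i<j. real (?Mn - i) / real (?N - i))"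
              by (rule prod_nonneg) (use f in blast)
            show "(\<Prod>i<j. real (?Mn - i) / real (?N - i)) \<le> 1"
              by (rule prod_le_1) (use f in blast)
          qed
        qed
        have P2f: "0 \<le> real (?N - ?Mn - i) / real (?N - j - i) \<and> real (?N - ?Mn - i) / real (?N - j - i) \<le> rho"
          if i: "i \<in> {..<a - j}" for i
        proof -
          have "real (?N - ?Mn - i) / real (?N - j - i) \<le> real (?N - ?Mn) / real (?N - j)"
          proof (rule frac_mono_aux[OF jM e3])
            show "i + j < ?N" using i an by auto
          qed
          also have "\<dots> \<le> real (?N - ?Mn) / real (?N - k)"
          proof -
            have "?N - k \<le> ?N - j" using j by auto
            then have r1: "real (?N - k) \<le> real (?N - j)" by (simp only: of_nat_le_iff)
            have "j < ?N" using jk kN by linarith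
            then have "0 < ?N - k" "0 < ?N - j" using kN by auto
            then have r2: "0 < real (?N - j) * real (?N - k)" by (simp only: of_nat_0_less_iff mult_pos_pos)
            have r3: "0 \<le> real (?N - ?Mn)" by (rule of_nat_0_le_iff)
            show ?thesis by (rule divide_left_mono[OF r1 r3 r2])
          qed
          also have "\<dots> \<le> rho" using e1 by simp
          finally show ?thesis by simp
        qed
        have P2: "0 \<le> (\<Prod>i<a - j. real (?N - ?Mn - i) / real (?N - j - i)) \<and>
                  (\<Prod>i<a - j. real (?N - ?Mn - i) / real (?N - j - i)) \<le> rho ^ (a - j)"
        proof
          show "0 \<le> (\<Prod>i<a - j. real (?N - ?Mn - i) / real (?N - j - i))"
            using P2f by (intro prod_nonneg) auto
          have "(\<Prod>i<a - j. real (?N - ?Mn - i) / real (?N - j - i)) \<le> (\<Prod>i<a - j. rho)"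
            using P2f by (intro prod_mono) auto
          then show "(\<Prod>i<a - j. real (?N - ?Mn - i) / real (?N - j - i)) \<le> rho ^ (a - j)" by simp
        qed
        define p1 where "p1 = (\<Prod>i<j. real (?Mn - i) / real (?N - i))"
        define p2 where "p2 = (\<Prod>i<a - j. real (?N - ?Mn - i) / real (?N - j - i))"
        have q1: "0 \<le> p1" "p1 \<le> 1" using P1 unfolding p1_def by auto
        have q2: "0 \<le> p2" "p2 \<le> rho ^ (k * t)" using P2 rhopow unfolding p2_def by auto
        have PB: "p1 * p2 \<le> 1 * rho ^ (k * t)"
          by (rule mult_mono[OF q1(2) q2(2)]) (use q2(1) in auto)
        have P0: "0 \<le> p1 * p2" using q1 q2 by simp
        have C0: "0 \<le> real (k choose j)" by simp
        have "aterm k n (M n) t j = real (k choose j) * (p1 * p2)" unfolding at eq p1_def p2_def ..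
        moreover have "real (k choose j) * (p1 * p2) \<le> real (k choose j) * rho ^ (k * t)"
          using mult_left_mono[OF PB C0] by simp
        moreover have "0 \<le> real (k choose j) * (p1 * p2)" using P0 C0 by simp
        ultimately show ?thesis by simp
      qed
    qed
  qed
qed

lemma fterm_lim: "(\<lambda>n. fterm k n (M n) t) \<longlonglongrightarrow> limterm k c t"
proof -
  have "(\<lambda>n. \<Sum>j\<in>{1..k}. aterm k n (M n) t j * wt k t j) \<longlonglongrightarrow>
          (\<Sum>j\<in>{1..k}. real (k choose j) * c ^ j * (1 - c) ^ (k - j + k * t) * wt k t j)"
    by (intro tendsto_intros aterm_lim) auto
  moreover have "eventually (\<lambda>n. (\<Sum>j\<in>{1..k}. aterm k n (M n) t j * wt k t j) = fterm k n (M n) t) sequentially"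
    using eventually_gt_at_top[of t] by eventually_elim (simp add: fterm_def)
  ultimately show ?thesis unfolding limterm_def by (rule Lim_transform_eventually)
qed

lemma fterm_bound:
  "eventually (\<lambda>n. \<forall>t. norm (fterm k n (M n) t) \<le> (\<Sum>j\<in>{1..k}. real (k choose j)) * (rho ^ k) ^ t) sequentially"
  using aterm_bound
proof eventually_elim
  case (elim n)
  show ?case
  proof
    fix t
    have R: "0 \<le> (\<Sum>j\<in>{1..k}. real (k choose j)) * (rho ^ k) ^ t"
      using rho by (intro mult_nonneg_nonneg sum_nonneg zero_le_power) auto
    show "norm (fterm k n (M n) t) \<le> (\<Sum>j\<in>{1..k}. real (k choose j)) * (rho ^ k) ^ t"
    proof (cases "t < n")
      case False
      then have "fterm k n (M n) t = 0" by (simp add: fterm_def)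
      then show ?thesis using R by simp
    next
      case True
      have b: "0 \<le> aterm k n (M n) t j * wt k t j \<and> aterm k n (M n) t j * wt k t j \<le> real (k choose j) * rho ^ (k * t)"
        if j: "j \<in> {1..k}" for j
      proof -
        have w: "0 \<le> wt k t j \<and> wt k t j \<le> 1" using j k by (intro wt_bound) auto
        have A: "0 \<le> aterm k n (M n) t j \<and> aterm k n (M n) t j \<le> real (k choose j) * rho ^ (k * t)"
          using elim True j by blast
        have "aterm k n (M n) t j * wt k t j \<le> aterm k n (M n) t j * 1"
          using w A by (intro mult_left_mono) auto
        then show ?thesis using w A by auto
      qed
      have F: "fterm k n (M n) t = (\<Sum>j\<in>{1..k}. aterm k n (M n) t j * wt k t j)"
        using True by (simp add: fterm_def)
      have S0: "0 \<le> (\<Sum>j\<in>{1..k}. aterm k n (M n) t j * wt k t j)"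
        using b by (intro sum_nonneg) blast
      have S1: "(\<Sum>j\<in>{1..k}. aterm k n (M n) t j * wt k t j) \<le> (\<Sum>j\<in>{1..k}. real (k choose j) * rho ^ (k * t))"
        using b by (intro sum_mono) blast
      have S2: "(\<Sum>j\<in>{1..k}. real (k choose j) * rho ^ (k * t)) = (\<Sum>j\<in>{1..k}. real (k choose j)) * (rho ^ k) ^ t"
        by (simp add: sum_distrib_right power_mult)
      show ?thesis unfolding F using S0 S1 S2 by simp
    qed
  qed
qed

lemma main_limit:
  "(\<lambda>n. \<Sum>t<n. fterm k n (M n) t) \<longlonglongrightarrow> suminf (limterm k c)"
proof -
  have sm: "summable (\<lambda>t. (\<Sum>j\<in>{1..k}. real (k choose j)) * (rho ^ k) ^ t)"
    using rho k by (intro summable_mult summable_geometric) (auto simp: power_less_one_iff)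
  obtain N0 where N0: "\<And>n. n \<ge> N0 \<Longrightarrow> \<forall>t. norm (fterm k n (M n) t) \<le> (\<Sum>j\<in>{1..k}. real (k choose j)) * (rho ^ k) ^ t"
    using fterm_bound unfolding eventually_sequentially by blast
  have bnd: "eventually (\<lambda>(t, n). norm (fterm k n (M n) t) \<le> (\<Sum>j\<in>{1..k}. real (k choose j)) * (rho ^ k) ^ t)
      (at_top \<times>\<^sub>F sequentially)"
    unfolding eventually_prod_sequentially using N0 by auto
  have "((\<lambda>n. suminf (\<lambda>t. fterm k n (M n) t)) \<longlonglongrightarrow> suminf (limterm k c))"
    using tannerys_theorem[OF fterm_lim bnd sm] by simp
  moreover have "suminf (\<lambda>t. fterm k n (M n) t) = (\<Sum>t<n. fterm k n (M n) t)" for n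
    by (rule suminf_finite) (auto simp: fterm_def)
  ultimately show ?thesis by simp
qed

end




definition rk :: "nat \<Rightarrow> nat \<Rightarrow> nat" where "rk k i = i div k + 1"

lemma rank_mset_image:
  assumes "k > 0"
  shows "image_mset (rk k) (mset_set {0..<k * n}) = rank_mset n k"
proof (induction n)
  case 0 then show ?case by (simp add: rank_mset_def)
next
  case (Suc n)
  have U: "{0..<k * Suc n} = {0..<k * n} \<union> {k * n..<k * n + k}" by auto
  have blk: "image_mset (rk k) (mset_set {k * n..<k * n + k}) = replicate_mset k (Suc n)"
  proof -
    have "image_mset (rk k) (mset_set {k * n..<k * n + k}) = image_mset (\<lambda>_. Suc n) (mset_set {k * n..<k * n + k})"
    proof (rule image_mset_cong)
      fix x assume "x \<in># mset_set {k * n..<k * n + k}"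
      then have "k * n \<le> x" "x < k * n + k" by auto
      then have "x div k = n" by (intro div_nat_eqI) (simp_all add: mult.commute)
      then show "rk k x = Suc n" by (simp add: rk_def)
    qed
    then show ?thesis by (simp add: image_mset_const_eq)
  qed
  have "rank_mset (Suc n) k = rank_mset n k + replicate_mset k (Suc n)"
    by (simp add: rank_mset_def)
  then show ?case
    unfolding U using Suc blk by (subst mset_set_Union) auto
qed

lemma arrivals_image:
  assumes "k > 0"
  shows "arrivals n k = map (rk k) ` permutations_of_set {0..<k * n}"
  unfolding arrivals_def rank_mset_image[OF assms, symmetric]
  by (simp add: permutations_of_multiset_image permutations_of_set_altdef)

definition gfac :: "'a multiset \<Rightarrow> nat" where
  "gfac A = (\<Prod>x\<in>set_mset A. fact (count A x))"

lemma gfac_add: "gfac (A + {#x#}) = (count A x + 1) * gfac A"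
proof -
  have "(\<Prod>y\<in>set_mset (A+{#x#}). fact (count (A+{#x#}) y)) =
          (\<Prod>y\<in>set_mset (A+{#x#}). (if y = x then count A x + 1 else 1) * fact (count A y))"
    by (intro prod.cong) simp_all
  also have "\<dots> = (count A x + 1) * (\<Prod>y\<in>set_mset (A+{#x#}). fact (count A y))"
    by (simp add: prod.distrib)
  also have "(\<Prod>y\<in>set_mset (A+{#x#}). fact (count A y)) = (\<Prod>y\<in>set_mset A. fact (count A y))"
    by (intro prod.mono_neutral_right) (auto simp: not_in_iff)
  finally show ?thesis unfolding gfac_def .
qed

lemma gfac_pos: "gfac A > 0"
  unfolding gfac_def by (simp add: fact_gt_zero)

lemma fiber_card:
  assumes "finite L" "mset xs = image_mset r (mset_set L)"
  shows "card {p \<in> permutations_of_set L. map r p = xs} = gfac (mset xs)"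
  using assms
proof (induction xs arbitrary: L)
  case Nil
  then have "L = {}" by (simp add: mset_set_empty_iff)
  then show ?case by (simp add: gfac_def)
next
  case (Cons x xs L)
  define X where "X = {a \<in> L. r a = x}"
  have fin: "finite X" using Cons.prems by (simp add: X_def)
  have eq: "{p \<in> permutations_of_set L. map r p = x # xs} =
        (\<Union>a\<in>X. (#) a ` {p \<in> permutations_of_set (L - {a}). map r p = xs})"
  proof (intro equalityI subsetI)
    fix p assume "p \<in> {p \<in> permutations_of_set L. map r p = x # xs}"
    then obtain a p' where p: "p = a # p'" "r a = x" "map r p' = xs" "set p = L" "distinct p"
      by (cases p) (auto simp: permutations_of_set_def)
    then have "a \<in> X" "p' \<in> permutations_of_set (L - {a})"
      by (auto simp: X_def permutations_of_set_def)
    then show "p \<in> (\<Union>a\<in>X. (#) a ` {p \<in> permutations_of_set (L - {a}). map r p = xs})"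
      using p by auto
  next
    fix p assume "p \<in> (\<Union>a\<in>X. (#) a ` {p \<in> permutations_of_set (L - {a}). map r p = xs})"
    then obtain a p' where "a \<in> X" "p = a # p'" "p' \<in> permutations_of_set (L - {a})" "map r p' = xs"
      by auto
    then show "p \<in> {p \<in> permutations_of_set L. map r p = x # xs}"
      by (auto simp: X_def permutations_of_set_def)
  qed
  have each: "card {p \<in> permutations_of_set (L - {a}). map r p = xs} = gfac (mset xs)" if a: "a \<in> X" for a
  proof (rule Cons.IH)
    show "finite (L - {a})" using Cons.prems by simp
    have "a \<in> L" "r a = x" using a by (auto simp: X_def)
    then have "mset_set L = mset_set (L - {a}) + {#a#}"
      using Cons.prems(1) by (simp add: mset_set_Diff)
    then show "mset xs = image_mset r (mset_set (L - {a}))"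
      using Cons.prems(2) \<open>r a = x\<close> by simp
  qed
  have "card {p \<in> permutations_of_set L. map r p = x # xs} = (\<Sum>a\<in>X. gfac (mset xs))"
    unfolding eq using fin each
    by (subst card_UN_disjoint) (auto simp: card_image)
  also have "\<dots> = card X * gfac (mset xs)" by simp
  also have "card X = count (mset xs) x + 1"
  proof -
    have "count (image_mset r (mset_set L)) x = (\<Sum>y | y \<in># mset_set L \<and> x = r y. count (mset_set L) y)"
      by (rule count_image_mset')
    also have "{y. y \<in># mset_set L \<and> x = r y} = X" using Cons.prems(1) by (auto simp: X_def)
    also have "(\<Sum>y\<in>X. count (mset_set L) y) = (\<Sum>y\<in>X. 1)"
      using Cons.prems(1) by (intro sum.cong) (auto simp: X_def)
    finally have "card X = count (image_mset r (mset_set L)) x" by simp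
    moreover have "count (mset (x # xs)) x = count (image_mset r (mset_set L)) x"
      using Cons.prems(2) by (rule arg_cong)
    ultimately show ?thesis by simp
  qed
  also have "(count (mset xs) x + 1) * gfac (mset xs) = gfac (mset (x # xs))"
    using gfac_add[of "mset xs" x] by (simp add: add.commute)
  finally show ?case .
qed

lemma find_map_eq: "find P (map f xs) = map_option f (find (\<lambda>x. P (f x)) xs)"
  by (induction xs) auto

lemma find_Some_set: "find Q zs = Some x \<Longrightarrow> x \<in> set zs \<and> Q x"
  by (induction zs) (auto split: if_splits)

lemma first_hit:
  assumes "finite T" "G \<subseteq> {x\<in>T. Q x}"
  shows "card {zs \<in> permutations_of_set T. \<exists>x\<in>G. find Q zs = Some x} * card {x\<in>T. Q x} = card G * fact (card T)"
  using assms
proof (induction "card T" arbitrary: T)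
  case 0
  then have "T = {}" by simp
  then have "G = {}" using 0 by auto
  then show ?case by simp
next
  case (Suc n T)
  define E where "E T' = {zs \<in> permutations_of_set T'. \<exists>x\<in>G. find Q zs = Some x}" for T'
  have Tne: "T \<noteq> {}" using Suc.hyps by auto
  define q where "q = card {x\<in>T. Q x}"
  define Ea where "Ea a = (if Q a then (if a \<in> G then permutations_of_set (T - {a}) else {}) else E (T - {a}))" for a
  have Eeq: "E T = (\<Union>a\<in>T. (#) a ` Ea a)"
  proof (intro equalityI subsetI)
    fix zs assume "zs \<in> E T"
    then have zs: "zs \<in> permutations_of_set T" "\<exists>x\<in>G. find Q zs = Some x" by (auto simp: E_def)
    then obtain a zs' where a: "zs = a # zs'" "a \<in> T" "zs' \<in> permutations_of_set (T - {a})"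
      using Tne by (auto simp: permutations_of_set_nonempty)
    have "zs' \<in> Ea a"
      using zs(2) a Suc.prems(2) by (auto simp: Ea_def E_def split: if_splits)
    then show "zs \<in> (\<Union>a\<in>T. (#) a ` Ea a)" using a by auto
  next
    fix zs assume "zs \<in> (\<Union>a\<in>T. (#) a ` Ea a)"
    then obtain a zs' where a: "a \<in> T" "zs = a # zs'" "zs' \<in> Ea a" by auto
    then have "zs' \<in> permutations_of_set (T - {a})"
      by (auto simp: Ea_def E_def split: if_splits)
    then have "zs \<in> permutations_of_set T"
      using a Tne by (auto simp: permutations_of_set_nonempty)
    moreover have "\<exists>x\<in>G. find Q zs = Some x"
      using a(3) unfolding a(2) by (auto simp: Ea_def E_def split: if_splits)
    ultimately show "zs \<in> E T" by (simp add: E_def)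
  qed
  have finEa: "finite (Ea a)" for a by (auto simp: Ea_def E_def)
  have cardE: "card (E T) = (\<Sum>a\<in>T. card (Ea a))"
    unfolding Eeq using Suc.prems(1) finEa
    by (subst card_UN_disjoint) (auto simp: card_image)
  have cT: "card (T - {a}) = n" if "a \<in> T" for a using that Suc.hyps Suc.prems by simp
  have each: "card (Ea a) * q = (if a \<in> G then fact n * q else 0) + (if \<not> Q a then card G * fact n else 0)"
    if a: "a \<in> T" for a
  proof (cases "Q a")
    case True
    have "card (permutations_of_set (T - {a})) = fact n"
      using Suc.prems(1) cT[OF a] by (simp del: card_Diff_insert)
    then show ?thesis using a True by (auto simp: Ea_def)
  next
    case False
    then have aG: "a \<notin> G" using Suc.prems(2) by auto
    have q': "{x\<in>T - {a}. Q x} = {x\<in>T. Q x}" using False by auto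
    have "card (E (T - {a})) * card {x\<in>T - {a}. Q x} = card G * fact (card (T - {a}))"
      unfolding E_def using Suc.prems False a cT by (intro Suc.hyps(1)) auto
    then show ?thesis using False aG q' cT[OF a] by (simp add: Ea_def q_def E_def)
  qed
  have "card (E T) * q = (\<Sum>a\<in>T. card (Ea a) * q)" unfolding cardE by (simp add: sum_distrib_right)
  also have "\<dots> = (\<Sum>a\<in>T. (if a \<in> G then fact n * q else 0)) + (\<Sum>a\<in>T. (if \<not> Q a then card G * fact n else 0))"
    using each by (simp add: sum.distrib)
  also have "(\<Sum>a\<in>T. (if a \<in> G then fact n * q else 0)) = card G * (fact n * q)"
  proof -
    have "(\<Sum>a\<in>T. (if a \<in> G then fact n * q else 0)) = (\<Sum>a\<in>{a\<in>T. a \<in> G}. fact n * q)"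
      using sum.inter_filter[OF Suc.prems(1), of "\<lambda>_. fact n * q" "\<lambda>a. a \<in> G"] by simp
    also have "{a\<in>T. a \<in> G} = G" using Suc.prems(2) by auto
    finally show ?thesis by simp
  qed
  also have "(\<Sum>a\<in>T. (if \<not> Q a then card G * fact n else 0)) = card {a\<in>T. \<not> Q a} * (card G * fact n)"
  proof -
    have "(\<Sum>a\<in>T. (if \<not> Q a then card G * fact n else 0)) = (\<Sum>a\<in>{a\<in>T. \<not> Q a}. card G * fact n)"
      using sum.inter_filter[OF Suc.prems(1), of "\<lambda>_. card G * fact n" "\<lambda>a. \<not> Q a"] by simp
    then show ?thesis by simp
  qed
  also have "card {a\<in>T. \<not> Q a} = Suc n - q"
  proof -
    have "T = {a\<in>T. \<not> Q a} \<union> {x\<in>T. Q x}" by auto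
    moreover have "card ({a\<in>T. \<not> Q a} \<union> {x\<in>T. Q x}) = card {a\<in>T. \<not> Q a} + card {x\<in>T. Q x}"
      by (rule card_Un_disjoint) (use Suc.prems(1) in auto)
    ultimately have "card T = card {a\<in>T. \<not> Q a} + card {x\<in>T. Q x}" by simp
    then show ?thesis using Suc.hyps by (simp add: q_def)
  qed
  also have "card G * (fact n * q) + (Suc n - q) * (card G * fact n) = card G * fact (Suc n)"
  proof -
    have "card {x\<in>T. Q x} \<le> card T" by (rule card_mono[OF Suc.prems(1)]) auto
    then have "q \<le> Suc n" unfolding q_def using Suc.hyps by simp
    then have "q + (Suc n - q) = Suc n" by simp
    have "card G * fact n * (q + (Suc n - q)) = card G * fact n * q + card G * fact n * (Suc n - q)"
      by (rule add_mult_distrib2)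
    then have "card G * (fact n * q) + (Suc n - q) * (card G * fact n) = card G * fact n * (q + (Suc n - q))"
      by (simp only: mult_ac)
    also have "\<dots> = card G * fact (Suc n)" using \<open>q + (Suc n - q) = Suc n\<close> by (simp add: algebra_simps)
    finally show ?thesis .
  qed
  finally show ?case using Suc.hyps by (simp add: E_def q_def)
qed


lemma split_count:
  assumes U: "finite U" and MU: "M \<le> card U"
  shows "card {p \<in> permutations_of_set U. P (take M p) (drop M p)} =
    (\<Sum>S\<in>{S. S \<subseteq> U \<and> card S = M}. card {(ys, zs). ys \<in> permutations_of_set S \<and> zs \<in> permutations_of_set (U - S) \<and> P ys zs})"
proof -
  define B where "B S = {(ys, zs). ys \<in> permutations_of_set S \<and> zs \<in> permutations_of_set (U - S) \<and> P ys zs}" for S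
  define Fam where "Fam = {S. S \<subseteq> U \<and> card S = M}"
  define A where "A = {p \<in> permutations_of_set U. P (take M p) (drop M p)}"
  have finFam: "finite Fam" unfolding Fam_def using U by (rule finite_subset[rotated, OF finite_Pow_iff[THEN iffD2]]) auto
  have finB: "finite (B S)" for S
    by (rule finite_subset[of _ "permutations_of_set S \<times> permutations_of_set (U - S)"]) (auto simp: B_def)
  have bij: "bij_betw (\<lambda>p. (take M p, drop M p)) A (\<Union>S\<in>Fam. B S)"
  proof (rule bij_betw_imageI)
    show "inj_on (\<lambda>p. (take M p, drop M p)) A"
      by (rule inj_onI) (metis append_take_drop_id prod.inject)
    show "(\<lambda>p. (take M p, drop M p)) ` A = (\<Union>S\<in>Fam. B S)"
    proof (intro equalityI subsetI)
      fix x assume "x \<in> (\<lambda>p. (take M p, drop M p)) ` A"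
      then obtain p where p: "p \<in> A" "x = (take M p, drop M p)" by auto
      then have pU: "set p = U" "distinct p" "P (take M p) (drop M p)" by (auto simp: A_def permutations_of_set_def)
      have lp: "length p = card U" using pU by (metis distinct_card)
      define S where "S = set (take M p)"
      have "distinct (take M p)" using pU by simp
      then have cS: "card S = M" unfolding S_def using lp MU by (simp add: distinct_card min_def)
      have SU: "S \<subseteq> U" unfolding S_def using pU set_take_subset by metis
      have dd: "distinct (take M p @ drop M p)" using pU by simp
      have u: "set (take M p @ drop M p) = U" using pU(1) by simp
      then have u': "set (take M p) \<union> set (drop M p) = U" by (simp only: set_append)
      have d: "set (take M p) \<inter> set (drop M p) = {}" using dd unfolding distinct_append by blast
      have "set (drop M p) = U - S" using u' d unfolding S_def by blast
      then have "(take M p, drop M p) \<in> B S"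
        using pU dd unfolding B_def S_def by (auto simp: permutations_of_set_def)
      moreover have "S \<in> Fam" using cS SU by (simp add: Fam_def)
      ultimately show "x \<in> (\<Union>S\<in>Fam. B S)" using p by auto
    next
      fix x assume "x \<in> (\<Union>S\<in>Fam. B S)"
      then obtain S where S0: "S \<in> Fam" "x \<in> B S" by auto
      obtain ys zs where xyz: "x = (ys, zs)" by (cases x)
      have S: "S \<in> Fam" "x = (ys, zs)" "(ys, zs) \<in> B S" using S0 xyz by auto
      then have ys: "set ys = S" "distinct ys" and zs: "set zs = U - S" "distinct zs" and P: "P ys zs"
        by (auto simp: B_def permutations_of_set_def)
      have SU: "S \<subseteq> U" "card S = M" using S by (auto simp: Fam_def)
      have ly: "length ys = M" using ys SU by (metis distinct_card)
      have "ys @ zs \<in> permutations_of_set U"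
        using ys zs SU by (auto simp: permutations_of_set_def)
      moreover have "take M (ys @ zs) = ys" "drop M (ys @ zs) = zs" using ly by auto
      ultimately have "ys @ zs \<in> A" using P by (simp add: A_def)
      then show "x \<in> (\<lambda>p. (take M p, drop M p)) ` A"
        using S(2) \<open>take M (ys @ zs) = ys\<close> \<open>drop M (ys @ zs) = zs\<close> by (metis (no_types, lifting) image_eqI)
    qed
  qed
  have "card A = card (\<Union>S\<in>Fam. B S)" using bij by (rule bij_betw_same_card)
  also have "\<dots> = (\<Sum>S\<in>Fam. card (B S))"
  proof (rule card_UN_disjoint[OF finFam])
    show "\<forall>S\<in>Fam. finite (B S)" using finB by blast
    show "\<forall>S\<in>Fam. \<forall>S'\<in>Fam. S \<noteq> S' \<longrightarrow> B S \<inter> B S' = {}"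
      by (auto simp: B_def permutations_of_set_def)
  qed
  finally show ?thesis unfolding A_def B_def Fam_def .
qed


lemma rk_le_iff: "k > 0 \<Longrightarrow> rk k x \<le> v \<longleftrightarrow> x < k * v"
  unfolding rk_def using div_less_iff_less_mult[of k x v] by (simp add: mult.commute Suc_le_eq)

lemma rk_ge_iff: "k > 0 \<Longrightarrow> m \<le> rk k x \<longleftrightarrow> k * (m - 1) \<le> x"
proof -
  assume k: "k > 0"
  have "m \<le> rk k x \<longleftrightarrow> \<not> (x div k < m - 1)" unfolding rk_def by linarith
  also have "\<dots> \<longleftrightarrow> \<not> (x < (m - 1) * k)" using div_less_iff_less_mult[OF k, of x "m - 1"] by simp
  finally show ?thesis by (simp add: mult.commute not_less)
qed

lemma count_via_perm:
  assumes L: "finite L"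
  shows "card {p \<in> permutations_of_set L. W (map r p)} =
         card {xs \<in> map r ` permutations_of_set L. W xs} * gfac (image_mset r (mset_set L))"
proof -
  define X where "X = {xs \<in> map r ` permutations_of_set L. W xs}"
  have eq: "{p \<in> permutations_of_set L. W (map r p)} = (\<Union>xs\<in>X. {p \<in> permutations_of_set L. map r p = xs})"
    by (auto simp: X_def)
  have fib: "card {p \<in> permutations_of_set L. map r p = xs} = gfac (image_mset r (mset_set L))" if xsX: "xs \<in> X" for xs
  proof -
    obtain p0 where p0: "p0 \<in> permutations_of_set L" "xs = map r p0" using xsX unfolding X_def by blast
    have "mset p0 = mset_set L" using p0(1) by (auto simp: permutations_of_set_def mset_set_set)
    then have m: "mset xs = image_mset r (mset_set L)" using p0(2) by simp
    show ?thesis using fiber_card[OF L m] m by simp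
  qed
  have finX: "finite X" by (simp add: X_def)
  have "card {p \<in> permutations_of_set L. W (map r p)} = (\<Sum>xs\<in>X. card {p \<in> permutations_of_set L. map r p = xs})"
    unfolding eq by (rule card_UN_disjoint[OF finX]) auto
  also have "\<dots> = (\<Sum>xs\<in>X. gfac (image_mset r (mset_set L)))" using fib by simp
  finally show ?thesis by (simp add: X_def)
qed

lemma win_prob_perm:
  assumes k: "k > 0"
  shows "win_prob n k M = real (card {p \<in> permutations_of_set {0..<k * n}. strategy_wins n M (map (rk k) p)}) / fact (k * n)"
proof -
  define g where "g = gfac (image_mset (rk k) (mset_set {0..<k * n}))"
  have g: "real g > 0" using gfac_pos by (simp add: g_def)
  have A: "arrivals n k = map (rk k) ` permutations_of_set {0..<k * n}" by (rule arrivals_image[OF k])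
  have c1: "card {p \<in> permutations_of_set {0..<k * n}. strategy_wins n M (map (rk k) p)} =
      card {xs \<in> arrivals n k. strategy_wins n M xs} * g"
    unfolding A g_def by (rule count_via_perm) simp
  have c2: "card {p \<in> permutations_of_set {0..<k * n}. True} = card {xs \<in> arrivals n k. True} * g"
    unfolding A g_def by (rule count_via_perm) simp
  have c3: "card (permutations_of_set {0..<k * n}) = fact (k * n)" by simp
  have "win_prob n k M = real (card {xs \<in> arrivals n k. strategy_wins n M xs} * g) / real (card (arrivals n k) * g)"
    unfolding win_prob_def using g by simp
  also have "\<dots> = real (card {p \<in> permutations_of_set {0..<k * n}. strategy_wins n M (map (rk k) p)}) / fact (k * n)"
  proof -
    have "fact (k * n) = card (arrivals n k) * g" using c2 c3 by simp
    then have "(fact (k * n) :: real) = real (card (arrivals n k) * g)" by (metis of_nat_fact)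
    then show ?thesis unfolding c1[symmetric] by simp
  qed
  finally show ?thesis .
qed

locale comb =
  fixes k n M :: nat
  assumes k: "k > 0" and n: "n \<ge> 1" and M: "1 \<le> M" "M < k * n"
begin

abbreviation U where "U \<equiv> {0..<k * n}"

definition mx where "mx S = Max (rk k ` S)"
definition jr where "jr S = card {x\<in>S. rk k x = mx S}"
definition Gs where "Gs S = {x \<in> U - S. rk k x = n}"
definition qs where "qs S = card {x \<in> U - S. mx S \<le> rk k x}"
definition Fam where "Fam = {S. S \<subseteq> U \<and> card S = M}"

lemma rk_U: "x \<in> U \<Longrightarrow> 1 \<le> rk k x \<and> rk k x \<le> n"
  using rk_le_iff[OF k, of x n] by (auto simp: rk_def)

lemma set_rank_eq: "{x\<in>U. rk k x = v} = {k * (v - 1)..<k * v}" if "1 \<le> v" "v \<le> n"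
proof -
  have iff: "rk k x = v \<longleftrightarrow> k * (v - 1) \<le> x \<and> x < k * v" for x
    using rk_le_iff[OF k, of x v] rk_ge_iff[OF k, of v x] by linarith
  have kv: "k * v \<le> k * n" using that(2) by (rule mult_le_mono2)
  show ?thesis
  proof (rule set_eqI)
    fix x show "x \<in> {x\<in>U. rk k x = v} \<longleftrightarrow> x \<in> {k * (v - 1)..<k * v}"
      unfolding mem_Collect_eq atLeastLessThan_iff iff using kv by arith
  qed
qed

lemma card_rank_eq: "card {x\<in>U. rk k x = v} = k" if "1 \<le> v" "v \<le> n"
proof -
  have "k * v = k * (v - 1) + k" using that by (cases v) auto
  then show ?thesis unfolding set_rank_eq[OF that] by simp
qed

lemma set_rank_ge: "{x\<in>U. m \<le> rk k x} = {k * (m - 1)..<k * n}"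
proof (rule set_eqI)
  fix x show "x \<in> {x\<in>U. m \<le> rk k x} \<longleftrightarrow> x \<in> {k * (m - 1)..<k * n}"
    unfolding mem_Collect_eq atLeastLessThan_iff rk_ge_iff[OF k] by arith
qed

lemma set_rank_lt: "{x\<in>U. rk k x < m} = {0..<k * (m - 1)}" if "1 \<le> m" "m \<le> n"
proof -
  have iff: "rk k x < m \<longleftrightarrow> x < k * (m - 1)" for x
    using rk_ge_iff[OF k, of m x] by linarith
  have "m - 1 \<le> n" using that by simp
  then have kv: "k * (m - 1) \<le> k * n" by (rule mult_le_mono2)
  show ?thesis
  proof (rule set_eqI)
    fix x show "x \<in> {x\<in>U. rk k x < m} \<longleftrightarrow> x \<in> {0..<k * (m - 1)}"
      unfolding mem_Collect_eq atLeastLessThan_iff iff using kv by arith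
  qed
qed

lemma Fam_props:
  assumes S: "S \<in> Fam"
  shows "S \<noteq> {}" "finite S" "S \<subseteq> U" "card S = M" "mx S \<in> {1..n}"
        "\<And>x. x \<in> S \<Longrightarrow> rk k x \<le> mx S" "\<exists>x\<in>S. rk k x = mx S" "jr S \<in> {1..k}"
proof -
  show SU: "S \<subseteq> U" and cS: "card S = M" using S by (auto simp: Fam_def)
  show fS: "finite S" by (rule finite_subset[OF SU]) simp
  show ne: "S \<noteq> {}" using cS M by auto
  have fin: "finite (rk k ` S)" "rk k ` S \<noteq> {}" using fS ne by auto
  show le: "\<And>x. x \<in> S \<Longrightarrow> rk k x \<le> mx S" unfolding mx_def using fin by simp
  show ex: "\<exists>x\<in>S. rk k x = mx S" unfolding mx_def using Max_in[OF fin] by auto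
  then obtain x0 where x0: "x0 \<in> S" "rk k x0 = mx S" by blast
  have "x0 \<in> U" using x0 SU by blast
  then have b0: "1 \<le> mx S" "mx S \<le> n" using rk_U[of x0] x0 by auto
  show "mx S \<in> {1..n}" using b0 by simp
  have "{x\<in>S. rk k x = mx S} \<subseteq> {x\<in>U. rk k x = mx S}" using SU by auto
  then have "jr S \<le> card {x\<in>U. rk k x = mx S}" unfolding jr_def by (intro card_mono) auto
  also have "\<dots> = k" using b0 by (rule card_rank_eq)
  finally have "jr S \<le> k" .
  moreover have "jr S \<ge> 1"
  proof -
    have ne: "x0 \<in> {x\<in>S. rk k x = mx S}" using x0 by simp
    have fin: "finite {x\<in>S. rk k x = mx S}" using fS by simp
    have "0 < jr S" unfolding jr_def using fin ne by (auto simp: card_gt_0_iff)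
    then show ?thesis by simp
  qed
  ultimately show "jr S \<in> {1..k}" by simp
qed


lemma finite_Fam: "finite Fam"
proof -
  have "Fam \<subseteq> Pow U" by (auto simp: Fam_def)
  then show ?thesis by (rule finite_subset) simp
qed

lemma qs_val:
  assumes S: "S \<in> Fam"
  shows "qs S = k - jr S + k * (n - mx S)"
proof -
  note P = Fam_props[OF S]
  define m where "m = mx S"
  have m: "1 \<le> m" "m \<le> n" using P(5) by (auto simp: m_def)
  have eq: "{x \<in> U - S. m \<le> rk k x} = {x\<in>U. m \<le> rk k x} - {x\<in>S. rk k x = m}"
  proof (rule set_eqI)
    fix x
    have "x \<in> S \<Longrightarrow> rk k x \<le> m" using P(6) by (simp add: m_def)
    then show "x \<in> {x \<in> U - S. m \<le> rk k x} \<longleftrightarrow> x \<in> {x\<in>U. m \<le> rk k x} - {x\<in>S. rk k x = m}"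
      using P(3) by auto
  qed
  have sub: "{x\<in>S. rk k x = m} \<subseteq> {x\<in>U. m \<le> rk k x}" using P(3) by auto
  have fin: "finite {x\<in>S. rk k x = m}" using P(2) by simp
  have "qs S = card {x\<in>U. m \<le> rk k x} - card {x\<in>S. rk k x = m}"
    unfolding qs_def m_def[symmetric] eq by (rule card_Diff_subset[OF fin sub])
  also have "card {x\<in>U. m \<le> rk k x} = k * n - k * (m - 1)" unfolding set_rank_ge by simp
  also have "card {x\<in>S. rk k x = m} = jr S" by (simp add: jr_def m_def)
  also have "k * n = k * (m - 1) + (k + k * (n - m))"
  proof -
    have "n = (m - 1) + (1 + (n - m))" using m by simp
    then have "k * n = k * ((m - 1) + (1 + (n - m)))" by (rule arg_cong)
    also have "\<dots> = k * (m - 1) + (k + k * (n - m))" by (simp add: add_mult_distrib2)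
    finally show ?thesis .
  qed
  also have "k * (m - 1) + (k + k * (n - m)) - k * (m - 1) - jr S = k - jr S + k * (n - m)"
    using P(8) by simp
  finally show ?thesis by (simp add: m_def)
qed

lemma Gs_val:
  assumes S: "S \<in> Fam"
  shows "card (Gs S) = (if mx S < n then k else k - jr S)"
proof -
  note P = Fam_props[OF S]
  have kn: "card {x\<in>U. rk k x = n} = k" using n by (intro card_rank_eq) auto
  show ?thesis
  proof (cases "mx S < n")
    case True
    have "Gs S = {x\<in>U. rk k x = n}"
    proof (rule set_eqI)
      fix x
      have "x \<in> S \<Longrightarrow> rk k x < n" using P(6)[of x] True by simp
      then show "x \<in> Gs S \<longleftrightarrow> x \<in> {x\<in>U. rk k x = n}" unfolding Gs_def by auto
    qed
    then show ?thesis using True kn by simp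
  next
    case False
    then have mn: "mx S = n" using P(5) by simp
    have eq: "Gs S = {x\<in>U. rk k x = n} - {x\<in>S. rk k x = n}"
      unfolding Gs_def by auto
    have sub: "{x\<in>S. rk k x = n} \<subseteq> {x\<in>U. rk k x = n}" using P(3) by auto
    have fin: "finite {x\<in>S. rk k x = n}" using P(2) by simp
    have "card (Gs S) = k - card {x\<in>S. rk k x = n}"
      unfolding eq card_Diff_subset[OF fin sub] kn ..
    also have "card {x\<in>S. rk k x = n} = jr S" unfolding jr_def mn ..
    finally show ?thesis using False by simp
  qed
qed

lemma h_val:
  assumes S: "S \<in> Fam"
  shows "real (card (Gs S)) / real (qs S) = wt k (n - mx S) (jr S)"
proof -
  note P = Fam_props[OF S]
  show ?thesis
  proof (cases "mx S < n")
    case True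
    then show ?thesis unfolding Gs_val[OF S] qs_val[OF S] wt_def by simp
  next
    case False
    then have "mx S = n" using P(5) by simp
    then show ?thesis unfolding Gs_val[OF S] qs_val[OF S] wt_def by simp
  qed
qed

lemma class_count:
  assumes m: "1 \<le> m" "m \<le> n" and j: "1 \<le> j" "j \<le> k"
  shows "card {S\<in>Fam. mx S = m \<and> jr S = j} = (if j \<le> M then (k choose j) * ((k * (m - 1)) choose (M - j)) else 0)"
proof (cases "j \<le> M")
  case False
  have e: "{S\<in>Fam. mx S = m \<and> jr S = j} = {}"
  proof (rule ccontr)
    assume "{S\<in>Fam. mx S = m \<and> jr S = j} \<noteq> {}"
    then obtain S where S: "S \<in> Fam" "jr S = j" by auto
    note P = Fam_props[OF S(1)]
    have "jr S \<le> card S" unfolding jr_def using P(2) by (intro card_mono) auto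
    then show False using S P(4) False by simp
  qed
  show ?thesis unfolding e using False by simp
next
  case True
  define R where "R = {x\<in>U. rk k x = m}"
  define L where "L = {x\<in>U. rk k x < m}"
  have cR: "card R = k" unfolding R_def using m by (rule card_rank_eq)
  have cL: "card L = k * (m - 1)" unfolding L_def set_rank_lt[OF m] by simp
  have fR: "finite R" "finite L" by (auto simp: R_def L_def)
  have RL: "R \<inter> L = {}" by (auto simp: R_def L_def)
  define C where "C = {S\<in>Fam. mx S = m \<and> jr S = j}"
  define D where "D = {A. A \<subseteq> R \<and> card A = j} \<times> {B. B \<subseteq> L \<and> card B = M - j}"
  have bij: "bij_betw (\<lambda>S. (S \<inter> R, S \<inter> L)) C D"
  proof (rule bij_betw_imageI)
    have split: "S = (S \<inter> R) \<union> (S \<inter> L)" if "S \<in> C" for S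
    proof -
      have S: "S \<in> Fam" "mx S = m" using that by (auto simp: C_def)
      note P = Fam_props[OF S(1)]
      show ?thesis
      proof (rule set_eqI)
        fix x
        have "x \<in> S \<Longrightarrow> x \<in> U \<and> rk k x \<le> m" using P(3) P(6)[of x] S(2) by auto
        then show "x \<in> S \<longleftrightarrow> x \<in> (S \<inter> R) \<union> (S \<inter> L)" unfolding R_def L_def by auto
      qed
    qed
    show "inj_on (\<lambda>S. (S \<inter> R, S \<inter> L)) C"
    proof (rule inj_onI)
      fix S S' assume "S \<in> C" "S' \<in> C" "(S \<inter> R, S \<inter> L) = (S' \<inter> R, S' \<inter> L)"
      then show "S = S'" using split by (metis prod.inject)
    qed
    show "(\<lambda>S. (S \<inter> R, S \<inter> L)) ` C = D"
    proof (intro equalityI subsetI)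
      fix y assume "y \<in> (\<lambda>S. (S \<inter> R, S \<inter> L)) ` C"
      then obtain S where SC: "S \<in> C" and y: "y = (S \<inter> R, S \<inter> L)" by auto
      have S: "S \<in> Fam" "mx S = m" "jr S = j" using SC by (auto simp: C_def)
      note P = Fam_props[OF S(1)]
      have SR: "S \<inter> R = {x\<in>S. rk k x = mx S}" using P(3) S(2) by (auto simp: R_def)
      have c1: "card (S \<inter> R) = j" using SR S(3) by (simp add: jr_def)
      have "card ((S \<inter> R) \<union> (S \<inter> L)) = card (S \<inter> R) + card (S \<inter> L)"
        by (rule card_Un_disjoint) (use fR RL in auto)
      then have "card S = card (S \<inter> R) + card (S \<inter> L)" using split[OF SC] by simp
      then have c2: "card (S \<inter> L) = M - j" using c1 P(4) by simp
      show "y \<in> D" unfolding y D_def using c1 c2 by auto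
    next
      fix y assume "y \<in> D"
      then obtain A B where y: "y = (A, B)" and A: "A \<subseteq> R" "card A = j" and B: "B \<subseteq> L" "card B = M - j"
        by (auto simp: D_def)
      define S where "S = A \<union> B"
      have AB: "A \<inter> B = {}" using A B RL by auto
      have fA: "finite A" "finite B" using A B fR finite_subset by blast+
      have SU: "S \<subseteq> U" using A B by (auto simp: S_def R_def L_def)
      have cS: "card S = M" unfolding S_def using card_Un_disjoint[OF fA AB] A B True by simp
      have Ane: "A \<noteq> {}" using A j by auto
      have rkS: "x \<in> S \<Longrightarrow> rk k x \<le> m" for x using A B by (auto simp: S_def R_def L_def)
      have mxS: "mx S = m"
      proof -
        obtain a where a: "a \<in> A" using Ane by auto
        have "rk k a = m" using a A by (auto simp: R_def)
        moreover have "finite (rk k ` S)" using fA by (simp add: S_def)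
        ultimately show ?thesis unfolding mx_def using a rkS
          by (intro Max_eqI) (auto simp: S_def)
      qed
      have SR: "S \<inter> R = A" using A B RL by (auto simp: S_def)
      have SL: "S \<inter> L = B" using A B RL by (auto simp: S_def)
      have "{x\<in>S. rk k x = mx S} = A" unfolding mxS using A B by (auto simp: S_def R_def L_def)
      then have jS: "jr S = j" using A by (simp add: jr_def)
      have "S \<in> C" using SU cS mxS jS by (simp add: C_def Fam_def)
      then show "y \<in> (\<lambda>S. (S \<inter> R, S \<inter> L)) ` C" using y SR SL by force
    qed
  qed
  have "card C = card D" using bij by (rule bij_betw_same_card)
  also have "card D = (k choose j) * ((k * (m - 1)) choose (M - j))"
    unfolding D_def card_cartesian_product using n_subsets[OF fR(1)] n_subsets[OF fR(2)] cR cL by simp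
  finally show ?thesis using True by (simp add: C_def)
qed


definition Phi where "Phi S zs = (\<exists>x\<in>Gs S. find (\<lambda>x. mx S \<le> rk k x) zs = Some x)"

lemma strategy_iff:
  assumes p: "p \<in> permutations_of_set U"
  shows "strategy_wins n M (map (rk k) p) \<longleftrightarrow> Phi (set (take M p)) (drop M p)"
proof -
  define S where "S = set (take M p)"
  define zs where "zs = drop M p"
  have pd: "distinct p" "set p = U" using p by (auto simp: permutations_of_set_def)
  have dd: "distinct (take M p @ drop M p)" using pd by simp
  have u: "set (take M p @ drop M p) = U" using pd by simp
  then have u': "set (take M p) \<union> set (drop M p) = U" by (simp only: set_append)
  have d: "set (take M p) \<inter> set (drop M p) = {}" using dd unfolding distinct_append by blast
  have setzs: "set zs = U - S" unfolding zs_def S_def using u' d by blast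
  have mxS: "Max (set (take M (map (rk k) p))) = mx S"
    unfolding mx_def S_def take_map by simp
  have "strategy_wins n M (map (rk k) p) \<longleftrightarrow>
     (case map_option (rk k) (find (\<lambda>x. mx S \<le> rk k x) zs) of Some r \<Rightarrow> r = n | None \<Rightarrow> False)"
    unfolding strategy_wins_def mxS drop_map find_map_eq zs_def ..
  also have "\<dots> \<longleftrightarrow> (\<exists>x. find (\<lambda>x. mx S \<le> rk k x) zs = Some x \<and> rk k x = n)"
    by (cases "find (\<lambda>x. mx S \<le> rk k x) zs") auto
  also have "\<dots> \<longleftrightarrow> Phi S zs"
  proof
    assume "\<exists>x. find (\<lambda>x. mx S \<le> rk k x) zs = Some x \<and> rk k x = n"
    then obtain x where x: "find (\<lambda>x. mx S \<le> rk k x) zs = Some x" "rk k x = n" by blast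
    then have "x \<in> set zs" using find_Some_set by fastforce
    then have "x \<in> Gs S" using setzs x(2) by (simp add: Gs_def)
    then show "Phi S zs" using x unfolding Phi_def by blast
  next
    assume "Phi S zs"
    then obtain x where "x \<in> Gs S" "find (\<lambda>x. mx S \<le> rk k x) zs = Some x" unfolding Phi_def by blast
    then show "\<exists>x. find (\<lambda>x. mx S \<le> rk k x) zs = Some x \<and> rk k x = n" by (auto simp: Gs_def)
  qed
  finally show ?thesis by (simp add: S_def zs_def)
qed

definition E where "E S = {zs \<in> permutations_of_set (U - S). Phi S zs}"

lemma count_split:
  "card {p \<in> permutations_of_set U. strategy_wins n M (map (rk k) p)} = (\<Sum>S\<in>Fam. fact M * card (E S))"
proof -
  have "{p \<in> permutations_of_set U. strategy_wins n M (map (rk k) p)} =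
        {p \<in> permutations_of_set U. (\<lambda>ys zs. Phi (set ys) zs) (take M p) (drop M p)}"
    using strategy_iff by auto
  then have "card {p \<in> permutations_of_set U. strategy_wins n M (map (rk k) p)} =
    (\<Sum>S\<in>{S. S \<subseteq> U \<and> card S = M}. card {(ys, zs). ys \<in> permutations_of_set S \<and> zs \<in> permutations_of_set (U - S) \<and> Phi (set ys) zs})"
    using split_count[of U M "\<lambda>ys zs. Phi (set ys) zs"] M by simp
  also have "\<dots> = (\<Sum>S\<in>Fam. fact M * card (E S))"
  proof (rule sum.cong)
    show "{S. S \<subseteq> U \<and> card S = M} = Fam" by (simp add: Fam_def)
  next
    fix S assume S: "S \<in> Fam"
    note P = Fam_props[OF S]
    have "{(ys, zs). ys \<in> permutations_of_set S \<and> zs \<in> permutations_of_set (U - S) \<and> Phi (set ys) zs}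
        = permutations_of_set S \<times> E S"
      by (auto simp: E_def permutations_of_set_def)
    then show "card {(ys, zs). ys \<in> permutations_of_set S \<and> zs \<in> permutations_of_set (U - S) \<and> Phi (set ys) zs} =
        fact M * card (E S)"
      using P(2,4) by (simp add: card_cartesian_product)
  qed
  finally show ?thesis .
qed

lemma E_card:
  assumes S: "S \<in> Fam"
  shows "real (card (E S)) = real (card (Gs S)) * fact (k * n - M) / real (qs S)"
proof -
  note P = Fam_props[OF S]
  have sub: "Gs S \<subseteq> {x \<in> U - S. mx S \<le> rk k x}" using P(5) by (auto simp: Gs_def)
  have cT: "card (U - S) = k * n - M" using P(2,3,4) by (simp add: card_Diff_subset)
  have fh: "card (E S) * qs S = card (Gs S) * fact (k * n - M)"
    using first_hit[of "U - S" "Gs S" "\<lambda>x. mx S \<le> rk k x"] sub cT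
    unfolding E_def Phi_def qs_def by simp
  show ?thesis
  proof (cases "qs S = 0")
    case True
    then have "card (Gs S) = 0" using fh by simp
    then have "Gs S = {}" by (simp add: Gs_def)
    then have "E S = {}" by (simp add: E_def Phi_def)
    then show ?thesis using True by simp
  next
    case False
    have "real (card (E S)) * real (qs S) = real (card (Gs S)) * fact (k * n - M)"
      using arg_cong[OF fh, of real] by simp
    then show ?thesis using False by (simp add: field_simps)
  qed
qed


lemma sum_h:
  "(\<Sum>S\<in>Fam. real (card (Gs S)) / real (qs S)) =
   (\<Sum>m\<in>{1..n}. \<Sum>j\<in>{1..k}. real (card {S\<in>Fam. mx S = m \<and> jr S = j}) * wt k (n - m) j)"
proof -
  have img: "(\<lambda>S. (mx S, jr S)) ` Fam \<subseteq> {1..n} \<times> {1..k}"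
    using Fam_props(5,8) by blast
  have "(\<Sum>S\<in>Fam. real (card (Gs S)) / real (qs S)) =
     (\<Sum>y\<in>{1..n} \<times> {1..k}. \<Sum>S\<in>{S. S \<in> Fam \<and> (mx S, jr S) = y}. real (card (Gs S)) / real (qs S))"
    by (rule sum.group[symmetric, OF finite_Fam _ img]) simp
  also have "\<dots> = (\<Sum>y\<in>{1..n} \<times> {1..k}. real (card {S\<in>Fam. mx S = fst y \<and> jr S = snd y}) * wt k (n - fst y) (snd y))"
  proof (rule sum.cong[OF refl])
    fix y :: "nat \<times> nat"
    have "(\<Sum>S\<in>{S. S \<in> Fam \<and> (mx S, jr S) = y}. real (card (Gs S)) / real (qs S)) =
          (\<Sum>S\<in>{S\<in>Fam. mx S = fst y \<and> jr S = snd y}. wt k (n - fst y) (snd y))"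
    proof (rule sum.cong)
      show "{S. S \<in> Fam \<and> (mx S, jr S) = y} = {S\<in>Fam. mx S = fst y \<and> jr S = snd y}" by (cases y) auto
    next
      fix S assume "S \<in> {S\<in>Fam. mx S = fst y \<and> jr S = snd y}"
      then show "real (card (Gs S)) / real (qs S) = wt k (n - fst y) (snd y)" using h_val by auto
    qed
    then show "(\<Sum>S\<in>{S. S \<in> Fam \<and> (mx S, jr S) = y}. real (card (Gs S)) / real (qs S)) =
          real (card {S\<in>Fam. mx S = fst y \<and> jr S = snd y}) * wt k (n - fst y) (snd y)" by simp
  qed
  also have "\<dots> = (\<Sum>m\<in>{1..n}. \<Sum>j\<in>{1..k}. real (card {S\<in>Fam. mx S = m \<and> jr S = j}) * wt k (n - m) j)"
    by (subst sum.cartesian_product) (simp add: case_prod_beta)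
  finally show ?thesis .
qed

lemma win_formula: "win_prob n k M = (\<Sum>t<n. fterm k n M t)"
proof -
  define C where "C = real ((k * n) choose M)"
  have C: "C = fact (k * n) / (fact M * fact (k * n - M))" unfolding C_def using M by (simp add: binomial_fact)
  have Cpos: "C > 0" unfolding C_def using M by simp
  have "win_prob n k M = real (\<Sum>S\<in>Fam. fact M * card (E S)) / fact (k * n)"
    using win_prob_perm[OF k] count_split by simp
  also have "\<dots> = (\<Sum>S\<in>Fam. fact M * (real (card (Gs S)) * fact (k * n - M) / real (qs S))) / fact (k * n)"
    by (simp add: E_card)
  also have "\<dots> = (\<Sum>S\<in>Fam. real (card (Gs S)) / real (qs S)) / C"
    unfolding C by (simp add: sum_divide_distrib sum_distrib_left field_simps)
  also have "\<dots> = (\<Sum>m\<in>{1..n}. \<Sum>j\<in>{1..k}. real (card {S\<in>Fam. mx S = m \<and> jr S = j}) * wt k (n - m) j) / C"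
    by (simp only: sum_h)
  also have "\<dots> = (\<Sum>t<n. \<Sum>j\<in>{1..k}. real (card {S\<in>Fam. mx S = n - t \<and> jr S = j}) * wt k t j) / C"
  proof -
    have "(\<Sum>m\<in>{1..n}. \<Sum>j\<in>{1..k}. real (card {S\<in>Fam. mx S = m \<and> jr S = j}) * wt k (n - m) j) =
          (\<Sum>t<n. \<Sum>j\<in>{1..k}. real (card {S\<in>Fam. mx S = n - t \<and> jr S = j}) * wt k (n - (n - t)) j)"
      by (rule sum.reindex_bij_witness[of _ "\<lambda>m. n - m" "\<lambda>t. n - t"]) auto
    also have "\<dots> = (\<Sum>t<n. \<Sum>j\<in>{1..k}. real (card {S\<in>Fam. mx S = n - t \<and> jr S = j}) * wt k t j)"
      by (intro sum.cong) auto
    finally show ?thesis by simp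
  qed
  also have "\<dots> = (\<Sum>t<n. fterm k n M t)"
    unfolding sum_divide_distrib
  proof (rule sum.cong[OF refl])
    fix t assume t: "t \<in> {..<n}"
    have "(\<Sum>j\<in>{1..k}. real (card {S\<in>Fam. mx S = n - t \<and> jr S = j}) * wt k t j / C) =
          (\<Sum>j\<in>{1..k}. aterm k n M t j * wt k t j)"
    proof (rule sum.cong[OF refl])
      fix j assume j: "j \<in> {1..k}"
      have "real (card {S\<in>Fam. mx S = n - t \<and> jr S = j}) / C = aterm k n M t j"
        using class_count[of "n - t" j] t j unfolding aterm_def C_def by auto
      then show "real (card {S\<in>Fam. mx S = n - t \<and> jr S = j}) * wt k t j / C = aterm k n M t j * wt k t j"
        by (metis times_divide_eq_left)
    qed
    then show "(\<Sum>j\<in>{1..k}. real (card {S\<in>Fam. mx S = n - t \<and> jr S = j}) * wt k t j / C) = fterm k n M t"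
      using t by (simp add: fterm_def)
  qed
  finally show ?thesis .
qed

end



theorem theorem1:
  fixes k :: nat and c :: real and M :: "nat \<Rightarrow> nat"
  assumes "k \<ge> 2" and "0 < c" and "c < 1"
    and "\<And>n. n \<ge> 1 \<Longrightarrow> 1 \<le> M n \<and> M n \<le> k * n - 1"
    and "(\<lambda>n. real (M n) / real (k * n)) \<longlonglongrightarrow> c"
  shows "(\<lambda>n. win_prob n k (M n)) \<longlonglongrightarrow>
    (- ((1 - c) ^ k) * (\<Sum>l = 1..k - 1. real (k choose l) * (c / (1 - c)) ^ l * (real l / real (k - l)))
     + real k * (\<Sum>l = 1..k - 1. real (k choose l) * c ^ l *
          integral {0..1 - c} (\<lambda>y. y ^ (k - l - 1) / (1 - y ^ k)))
     - c ^ k * ln (1 - (1 - c) ^ k))"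
proof -
  have asm: "asym k c M" using assms by unfold_locales auto
  interpret asym k c M by (rule asm)
  have lim1: "(\<lambda>n. \<Sum>t<n. fterm k n (M n) t) \<longlonglongrightarrow> suminf (limterm k c)"
    by (rule main_limit)
  have su: "suminf (limterm k c) =
    (- ((1 - c) ^ k) * (\<Sum>l = 1..k - 1. real (k choose l) * (c / (1 - c)) ^ l * (real l / real (k - l)))
     + real k * (\<Sum>l = 1..k - 1. real (k choose l) * c ^ l *
          integral {0..1 - c} (\<lambda>y. y ^ (k - l - 1) / (1 - y ^ k)))
     - c ^ k * ln (1 - (1 - c) ^ k))"
    using limterm_sums[OF assms(1,2,3)] by (rule sums_unique[symmetric])
  have ev: "eventually (\<lambda>n. (\<Sum>t<n. fterm k n (M n) t) = win_prob n k (M n)) sequentially"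
    using eventually_ge_at_top[of 1]
  proof eventually_elim
    case (elim n)
    have b: "1 \<le> M n \<and> M n \<le> k * n - 1" using assms(4) elim by blast
    have "k * 1 \<le> k * n" using elim by (intro mult_le_mono2)
    then have kn: "2 \<le> k * n" using assms(1) by linarith
    have "comb k n (M n)"
      by unfold_locales (use assms(1) elim b kn in auto)
    then show ?case by (rule comb.win_formula[symmetric])
  qed
  show ?thesis using Lim_transform_eventually[OF lim1 ev] su by simp
qed

end
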